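(* Let $f:\mathbb{R}^n\to\mathbb{R}^n$ be continuously differentiable and monotone, and let $q:\mathbb{R}^n\to\mathbb{R}\cup\{+\infty\}$ be proper, convex and lower semicontinuous. Given $x\in\mathbb{R}^n$ and $d\in\mathrm{dom}\,\partial q$, define \[\mu_f(x)=\min\{\langle\nabla f(x)u,u\rangle:\|u\|=1\},\] \[\mu_q(d)=\lim_{\rho\downarrow0}\inf\Bigl\{\frac{\langle d_1^*-d_2^*,d_1-d_2\rangle}{\|d_1-d_2\|^2}: d_i\in\mathcal{B}_\rho(d),\ (d_i,d_i^* )\in\mathrm{gph}\,\partial q,\ i=1,2,\ d_1\ne d_2\Bigr\}.\] Then for every $d^*\in\partial q(d)$, \[\min_{\|s\|=1}\operatorname{dist}\bigl(0,\nabla f(x)^Ts+D^*(\partial q)(d,d^* )(s)\bigr)\ge\mu_f(x)+\mu_q(d).\]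
   Context: $f$ monotone means $\langle f(x_2)-f(x_1),x_2-x_1\rangle\ge0$ for all $x_1,x_2$. $\mathcal{B}_\rho(d)$ is the closed ball of radius $\rho$ around $d$. The limiting coderivative is $D^*F(\bar x,\bar y)(v^* )=\{u^*:(u^*,-v^* )\in N_{\mathrm{gph}\, F}(\bar x,\bar y)\}$, where $N_C(\bar z)$ is the limiting (Mordukhovich) normal cone: the set of limits of $z_k^*\in\widehat N_C(z_k)$ with $z_k\to\bar z$ in $C$, and $\widehat N_C(z)$ is the polar of the contingent cone $T_C(z)=\{w:\exists t_k\downarrow0,w_k\to w,\ z+t_kw_k\in C\}$. *)

theory Defs
  imports "HOL-Analysis.Analysis"
begin

definition monotone_map :: "('a::real_inner \<Rightarrow> 'a) \<Rightarrow> bool" where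
  "monotone_map f \<longleftrightarrow> (\<forall>x1 x2. (f x2 - f x1) \<bullet> (x2 - x1) \<ge> 0)"

definition proper_fun :: "('a \<Rightarrow> ereal) \<Rightarrow> bool" where
  "proper_fun q \<longleftrightarrow> (\<forall>x. q x \<noteq> -\<infinity>) \<and> (\<exists>x. q x < \<infinity>)"

definition convex_efun :: "('a::real_vector \<Rightarrow> ereal) \<Rightarrow> bool" where
  "convex_efun q \<longleftrightarrow> convex {(x, r::real). q x \<le> ereal r}"

definition lsc_fun :: "('a::topological_space \<Rightarrow> ereal) \<Rightarrow> bool" where
  "lsc_fun q \<longleftrightarrow> (\<forall>x. q x \<le> Liminf (at x) q)"

definition subdiff :: "('a::real_inner \<Rightarrow> ereal) \<Rightarrow> 'a \<Rightarrow> 'a set" where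
  "subdiff q d = (if \<bar>q d\<bar> \<noteq> \<infinity>
      then {v. \<forall>y. q y \<ge> q d + ereal (v \<bullet> (y - d))} else {})"

definition graph_of :: "('a \<Rightarrow> 'b set) \<Rightarrow> ('a \<times> 'b) set" where
  "graph_of F = {(x, y). y \<in> F x}"

definition contingent_cone :: "'a::real_normed_vector set \<Rightarrow> 'a \<Rightarrow> 'a set" where
  "contingent_cone C z = {w. \<exists>t wk. (\<forall>k. t k > 0) \<and> t \<longlonglongrightarrow> 0 \<and> wk \<longlonglongrightarrow> w
        \<and> (\<forall>k. z + t k *\<^sub>R wk k \<in> C)}"

definition regular_normal_cone :: "'a::real_inner set \<Rightarrow> 'a \<Rightarrow> 'a set" where
  "regular_normal_cone C z = {v. \<forall>w \<in> contingent_cone C z. v \<bullet> w \<le> 0}"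

definition limiting_normal_cone :: "'a::real_inner set \<Rightarrow> 'a \<Rightarrow> 'a set" where
  "limiting_normal_cone C z = {v. \<exists>zk vk. (\<forall>k. zk k \<in> C \<and> vk k \<in> regular_normal_cone C (zk k))
        \<and> zk \<longlonglongrightarrow> z \<and> vk \<longlonglongrightarrow> v}"

definition coderivative :: "('a::real_inner \<Rightarrow> 'b::real_inner set) \<Rightarrow> 'a \<Rightarrow> 'b \<Rightarrow> 'b \<Rightarrow> 'a set" where
  "coderivative F x y v = {u. (u, - v) \<in> limiting_normal_cone (graph_of F) (x, y)}"

(* distance from 0 to a set, +\<infinity> for the empty set *)
definition edist0 :: "'a::real_normed_vector set \<Rightarrow> ereal" where
  "edist0 S = (INF w\<in>S. ereal (norm w))"

(* mu_f(x) with Jacobian matrix J *)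
definition mu_f :: "real^'n^'n \<Rightarrow> real" where
  "mu_f A = Inf ((\<lambda>u. (A *v u) \<bullet> u) ` sphere 0 1)"

definition mu_q :: "(real^'n \<Rightarrow> ereal) \<Rightarrow> real^'n \<Rightarrow> ereal" where
  "mu_q q d = Lim (at_right (0::real)) (\<lambda>\<rho>.
      Inf {ereal (((d1s - d2s) \<bullet> (d1 - d2)) / (norm (d1 - d2))\<^sup>2) | d1 d2 d1s d2s.
             d1 \<in> cball d \<rho> \<and> d2 \<in> cball d \<rho> \<and> d1s \<in> subdiff q d1 \<and> d2s \<in> subdiff q d2
             \<and> d1 \<noteq> d2})"

end

theory Submission
  imports Defs
begin

lemma subdiffD:
  assumes "v \<in> subdiff q d"
  shows "\<bar>q d\<bar> \<noteq> \<infinity>" "\<And>y. q y \<ge> q d + ereal (v \<bullet> (y - d))"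
  using assms by (auto simp: subdiff_def split: if_splits)

lemma subdiff_mono:
  assumes "d1s \<in> subdiff q d1" "d2s \<in> subdiff q d2"
  shows "0 \<le> (d1s - d2s) \<bullet> (d1 - d2)"
proof -
  obtain r1 where r1: "q d1 = ereal r1" using subdiffD(1)[OF assms(1)] by (cases "q d1") auto
  obtain r2 where r2: "q d2 = ereal r2" using subdiffD(1)[OF assms(2)] by (cases "q d2") auto
  have "r2 \<ge> r1 + d1s \<bullet> (d2 - d1)" using subdiffD(2)[OF assms(1), of d2] r1 r2 by simp
  moreover have "r1 \<ge> r2 + d2s \<bullet> (d1 - d2)" using subdiffD(2)[OF assms(2), of d1] r1 r2 by simp
  ultimately show ?thesis by (simp add: inner_diff_left inner_diff_right inner_commute)
qed

lemma le_of_small_t: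
  fixes A B :: real
  assumes "B \<ge> 0" "\<And>t. 0 < t \<Longrightarrow> t \<le> 1 \<Longrightarrow> A \<le> t * B"
  shows "A \<le> 0"
proof (rule ccontr)
  assume "\<not> A \<le> 0"
  hence A: "A > 0" by simp
  define t where "t = min 1 (A / (B + 1))"
  have t0: "0 < t" "t \<le> 1" using A assms(1) by (auto simp: t_def)
  have "t * B \<le> (A / (B+1)) * B" using assms(1) by (intro mult_right_mono) (auto simp: t_def)
  also have "\<dots> < A" using A assms(1) by (simp add: field_simps)
  finally show False using assms(2)[OF t0] by simp
qed

lemma prox_subgrad:
  fixes q :: "'a::real_inner \<Rightarrow> ereal"
  assumes cvx: "convex_efun q" and fin: "\<bar>q y\<bar> \<noteq> \<infinity>"
    and minz: "\<And>z. q y + ereal (norm (y - v)^2 / 2) \<le> q z + ereal (norm (z - v)^2 / 2)"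
  shows "v - y \<in> subdiff q y"
proof -
  obtain Y where Y: "q y = ereal Y" using fin by (cases "q y") auto
  have "q z \<ge> q y + ereal ((v - y) \<bullet> (z - y))" for z
  proof (cases "q z")
    case PInf then show ?thesis by simp
  next
    case MInf then show ?thesis using minz[of z] Y by simp
  next
    case (real Z)
    have key: "Y + (v - y) \<bullet> (z - y) - Z \<le> t * (norm (z - y)^2 / 2)" if t: "0 < t" "t \<le> 1" for t
    proof -
      define p where "p = (1 - t) *\<^sub>R y + t *\<^sub>R z"
      have "(1 - t) *\<^sub>R (y, Y) + t *\<^sub>R (z, Z) \<in> {(x, r::real). q x \<le> ereal r}"
      proof -
        have "(y, Y) \<in> {(x, r::real). q x \<le> ereal r}" "(z, Z) \<in> {(x, r::real). q x \<le> ereal r}"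
          using Y real by auto
        moreover have "convex {(x, r::real). q x \<le> ereal r}" using cvx by (simp add: convex_efun_def)
        ultimately show ?thesis using t by (intro convexD) auto
      qed
      hence qp: "q p \<le> ereal ((1 - t) * Y + t * Z)" by (simp add: p_def)
      have "ereal (Y + norm (y - v)^2 / 2) \<le> ereal ((1 - t) * Y + t * Z + norm (p - v)^2 / 2)"
      proof -
        have "q y + ereal (norm (y - v)^2 / 2) \<le> q p + ereal (norm (p - v)^2 / 2)" by (rule minz)
        also have "\<dots> \<le> ereal ((1 - t) * Y + t * Z) + ereal (norm (p - v)^2 / 2)"
          using qp by (rule add_right_mono)
        finally show ?thesis using Y by simp
      qed
      hence h1: "Y + norm (y - v)^2 / 2 \<le> (1 - t) * Y + t * Z + norm (p - v)^2 / 2" by simp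
      define a where "a = (y - v) \<bullet> (z - y)"
      define N1 where "N1 = norm (y - v)^2"
      define N2 where "N2 = norm (z - y)^2"
      have pv: "p - v = (y - v) + t *\<^sub>R (z - y)" by (simp add: p_def algebra_simps)
      have "norm (p - v)^2 = (y - v) \<bullet> (y - v) + 2 * t * ((y - v) \<bullet> (z - y)) + (t * t) * ((z - y) \<bullet> (z - y))"
        unfolding pv power2_norm_eq_inner inner_add_left inner_add_right inner_scaleR_left inner_scaleR_right
        by (simp add: inner_commute algebra_simps)
      hence pv2: "norm (p - v)^2 = N1 + 2 * t * a + (t * t) * N2"
        by (simp add: N1_def N2_def a_def power2_norm_eq_inner)
      have va: "(v - y) \<bullet> (z - y) = - a" unfolding a_def
        by (metis inner_minus_left minus_diff_eq)
      have h2: "Y + N1 / 2 \<le> Y - t * Y + t * Z + N1 / 2 + t * a + t * t * N2 / 2"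
        using h1 unfolding pv2 N1_def[symmetric] by (simp add: ring_distribs add_divide_distrib)
      have "t * (Y + (v - y) \<bullet> (z - y) - Z) \<le> t * (t * (norm (z - y)^2 / 2))"
        unfolding va N2_def[symmetric] using h2 by (simp add: ring_distribs right_diff_distrib)
      thus ?thesis using t by simp
    qed
    have "Y + (v - y) \<bullet> (z - y) - Z \<le> 0"
      by (rule le_of_small_t[OF _ key]) auto
    then show ?thesis using Y real by simp
  qed
  then show ?thesis using fin by (simp add: subdiff_def)
qed

lemma prox_min:
  fixes q :: "'a::euclidean_space \<Rightarrow> ereal"
  assumes lsc: "lsc_fun q" and ds: "ds \<in> subdiff q d"
  shows "\<exists>y. \<bar>q y\<bar> \<noteq> \<infinity> \<and> (\<forall>z. q y + ereal (norm (y - v)^2 / 2) \<le> q z + ereal (norm (z - v)^2 / 2))"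
proof -
  obtain D where qd: "q d = ereal D" using subdiffD(1)[OF ds] by (cases "q d") auto
  have low: "q z \<ge> ereal (D + ds \<bullet> (z - d))" for z using subdiffD(2)[OF ds, of z] qd by simp
  define G where "G z = q z + ereal (norm (z - v)^2 / 2)" for z
  define \<beta> where "\<beta> = D + ds \<bullet> (v - d) - norm ds ^ 2 / 2"
  have quad: "D + ds \<bullet> (z - d) + norm (z - v)^2 / 2 \<ge> \<beta>" for z
  proof -
    have "0 \<le> norm (z - v + ds)^2 / 2" by simp
    also have "norm (z - v + ds)^2 = norm (z - v)^2 + 2 * (ds \<bullet> (z - v)) + norm ds^2"
      unfolding power2_norm_eq_inner by (simp add: inner_add_left inner_add_right inner_commute)
    finally show ?thesis unfolding \<beta>_def by (simp add: inner_diff_right)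
  qed
  have Glow: "G z \<ge> ereal \<beta>" for z
  proof -
    have "ereal \<beta> \<le> ereal (D + ds \<bullet> (z - d)) + ereal (norm (z - v)^2 / 2)"
      using quad[of z] by simp
    also have "\<dots> \<le> G z" unfolding G_def by (intro add_right_mono low)
    finally show ?thesis .
  qed
  define m where "m = (INF z. G z)"
  have m_low: "m \<ge> ereal \<beta>" unfolding m_def by (intro INF_greatest Glow)
  have m_up: "m \<le> ereal (D + norm (d - v)^2 / 2)" unfolding m_def
    using INF_lower[of d UNIV G] by (simp add: G_def qd)
  obtain M where M: "m = ereal M" using m_low m_up by (cases m) auto
  have "\<exists>y. G y < ereal (M + inverse (real (Suc k)))" for k
  proof -
    have "m < ereal (M + inverse (real (Suc k)))" using M by simp
    thus ?thesis unfolding m_def by (simp add: INF_less_iff)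
  qed
  then obtain yk where yk: "\<And>k. G (yk k) < ereal (M + inverse (real (Suc k)))" by metis
  define R where "R = M + 1 - D - ds \<bullet> (v - d)"
  define K where "K = max 1 (4 * (R + norm ds ^ 2))"
  have bnd: "yk k \<in> cball v K" for k
  proof -
    define t where "t = norm (yk k - v)"
    have "ereal (D + ds \<bullet> (yk k - d)) + ereal (norm (yk k - v)^2 / 2) \<le> G (yk k)"
      unfolding G_def by (intro add_right_mono low)
    also have "\<dots> < ereal (M + 1)"
      using yk[of k] by (rule order.strict_trans2) (simp add: inverse_le_1_iff)
    finally have h: "D + ds \<bullet> (yk k - d) + t^2 / 2 < M + 1" by (simp add: t_def)
    have "ds \<bullet> (yk k - v) \<ge> - (norm ds * t)"
      using Cauchy_Schwarz_ineq2[of ds "yk k - v"] by (simp add: t_def abs_le_iff)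
    moreover have "ds \<bullet> (yk k - d) = ds \<bullet> (yk k - v) + ds \<bullet> (v - d)" by (simp add: inner_diff_right)
    ultimately have h2: "t^2 / 2 - norm ds * t < R" using h unfolding R_def by linarith
    have "0 \<le> (t / 2 - norm ds)^2" by simp
    hence "t^2 / 4 - norm ds^2 \<le> t^2 / 2 - norm ds * t" by (simp add: power2_eq_square algebra_simps)
    with h2 have "t^2 / 4 < R + norm ds^2" by linarith
    hence t2: "t^2 < 4 * (R + norm ds^2)" by (simp add: field_simps)
    have "t \<le> K"
    proof (cases "t \<le> 1")
      case True then show ?thesis by (simp add: K_def)
    next
      case False
      hence "t \<le> t^2" by (simp add: power2_eq_square)
      then show ?thesis using t2 by (simp add: K_def)
    qed
    then show ?thesis by (simp add: t_def dist_norm norm_minus_commute)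
  qed
  obtain y r where r: "strict_mono r" "(yk \<circ> r) \<longlonglongrightarrow> y"
    using seq_compactE[OF compact_imp_seq_compact[OF compact_cball[of v K]]] bnd by metis
  have Gy: "G y \<le> m"
  proof (rule ccontr)
    assume "\<not> G y \<le> m"
    hence lt: "ereal M < q y + ereal (norm (y - v)^2 / 2)" using M by (simp add: G_def)
    have "ereal (M - norm (y - v)^2 / 2) < q y"
    proof (cases "q y")
      case (real a) then show ?thesis using lt by simp
    qed (use lt in auto)
    then obtain c where c: "ereal (M - norm (y - v)^2 / 2) < ereal c" "ereal c < q y"
      using ereal_dense2 by blast
    have "ereal c < Liminf (at y) q" using c(2) lsc unfolding lsc_fun_def
      by (meson order.strict_trans2)
    hence ev: "eventually (\<lambda>z. ereal c < q z) (at y)"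
      using le_Liminf_iff[of "Liminf (at y) q" "at y" q] by blast
    then obtain \<delta> where \<delta>: "\<delta> > 0" "\<And>z. z \<noteq> y \<Longrightarrow> dist z y < \<delta> \<Longrightarrow> ereal c < q z"
      unfolding eventually_at by blast
    have "eventually (\<lambda>k. dist ((yk \<circ> r) k) y < \<delta>) sequentially"
      using r(2) \<delta>(1) by (rule tendstoD)
    hence ev2: "eventually (\<lambda>k. c + norm ((yk \<circ> r) k - v)^2 / 2 \<le> M + inverse (real (Suc (r k)))) sequentially"
    proof (rule eventually_mono)
      fix k assume "dist ((yk \<circ> r) k) y < \<delta>"
      hence qc: "ereal c < q (yk (r k))" using \<delta>(2) c(2) by (cases "yk (r k) = y") auto
      have "ereal c + ereal (norm (yk (r k) - v)^2 / 2) \<le> G (yk (r k))"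
        unfolding G_def using qc by (intro add_right_mono) simp
      also have "\<dots> < ereal (M + inverse (real (Suc (r k))))" by (rule yk)
      finally show "c + norm ((yk \<circ> r) k - v)^2 / 2 \<le> M + inverse (real (Suc (r k)))" by simp
    qed
    have l1: "(\<lambda>k. c + norm ((yk \<circ> r) k - v)^2 / 2) \<longlonglongrightarrow> c + norm (y - v)^2 / 2"
      using r(2) by (auto intro!: tendsto_intros simp: o_def)
    have "(\<lambda>k. inverse (real (Suc (r k)))) \<longlonglongrightarrow> 0"
      using LIMSEQ_subseq_LIMSEQ[OF LIMSEQ_inverse_real_of_nat r(1)] by (simp add: o_def)
    hence l2: "(\<lambda>k. M + inverse (real (Suc (r k)))) \<longlonglongrightarrow> M + 0"
      by (intro tendsto_intros)
    have "c + norm (y - v)^2 / 2 \<le> M + 0"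
      using tendsto_le[OF trivial_limit_sequentially l2 l1 ev2] .
    thus False using c(1) by simp
  qed
  have "q y \<noteq> -\<infinity>" using low[of y] by auto
  moreover have "q y \<noteq> \<infinity>" using Gy M by (auto simp: G_def)
  moreover have "\<forall>z. G y \<le> G z" using Gy unfolding m_def by (meson INF_lower UNIV_I order_trans)
  ultimately show ?thesis unfolding G_def by blast
qed

lemma prox_exists:
  fixes q :: "'a::euclidean_space \<Rightarrow> ereal"
  assumes cvx: "convex_efun q" and lsc: "lsc_fun q" and ds: "ds \<in> subdiff q d"
  shows "\<exists>y. v - y \<in> subdiff q y"
proof -
  from prox_min[OF lsc ds, of v] obtain y where y1: "\<bar>q y\<bar> \<noteq> \<infinity>"
    and y2: "\<forall>z. q y + ereal (norm (y - v)^2 / 2) \<le> q z + ereal (norm (z - v)^2 / 2)"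
    by (elim exE conjE)
  have "v - y \<in> subdiff q y" by (rule prox_subgrad[OF cvx y1]) (use y2 in blast)
  thus ?thesis by blast
qed

lemma algebra_key:
  fixes a c w :: "'a::real_inner" and \<mu> :: real
  assumes \<mu>: "\<mu> \<ge> 0"
    and i: "\<mu> * norm w ^ 2 \<le> ((a + (1 + 2 * \<mu>) *\<^sub>R c) - w) \<bullet> w"
    and ii: "a \<bullet> w + c \<bullet> ((a + (1 + 2 * \<mu>) *\<^sub>R c) - w) \<le> 0"
  shows "\<mu> * norm c ^ 2 \<le> - (a \<bullet> c)"
proof -
  define ab where "ab = a \<bullet> c"
  define aw where "aw = a \<bullet> w"
  define cw where "cw = c \<bullet> w"
  define cc where "cc = c \<bullet> c"
  define ww where "ww = w \<bullet> w"
  have i': "\<mu> * ww \<le> aw + cw + 2 * \<mu> * cw - ww"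
    using i by (simp add: ww_def aw_def cw_def power2_norm_eq_inner inner_diff_left inner_add_left algebra_simps)
  have ii': "aw + ab + cc + 2 * \<mu> * cc - cw \<le> 0"
    using ii by (simp add: ab_def aw_def cw_def cc_def inner_diff_right inner_add_right inner_commute algebra_simps)
  have "0 \<le> (1 + \<mu>) * (norm (w - c))^2" using \<mu> by simp
  also have "(norm (w - c))^2 = ww - 2 * cw + cc"
    by (simp add: power2_norm_eq_inner ww_def cw_def cc_def inner_diff_left inner_diff_right inner_commute)
  finally have "0 \<le> (1 + \<mu>) * (ww - 2 * cw + cc)" .
  hence F: "0 \<le> ww - 2 * cw + cc + \<mu> * ww - 2 * \<mu> * cw + \<mu> * cc" by (simp add: algebra_simps)
  have "\<mu> * cc \<le> - ab" using i' ii' F by linarith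
  thus ?thesis by (simp add: ab_def cc_def power2_norm_eq_inner)
qed

lemma regular_normal_bound:
  fixes q :: "'a::euclidean_space \<Rightarrow> ereal"
  assumes prox: "\<And>v. \<exists>y. v - y \<in> subdiff q y"
    and \<rho>: "\<rho> > 0" and \<mu>: "\<mu> \<ge> 0"
    and strong: "\<And>d1 d2 d1s d2s. d1 \<in> cball d \<rho> \<Longrightarrow> d2 \<in> cball d \<rho> \<Longrightarrow> d1s \<in> subdiff q d1
       \<Longrightarrow> d2s \<in> subdiff q d2 \<Longrightarrow> \<mu> * norm (d1 - d2)^2 \<le> (d1s - d2s) \<bullet> (d1 - d2)"
    and z: "dist d z < \<rho> / 2" and zs: "zs \<in> subdiff q z"
    and nc: "(a, c) \<in> regular_normal_cone (graph_of (subdiff q)) (z, zs)"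
  shows "\<mu> * norm c ^ 2 \<le> - (a \<bullet> c)"
proof -
  define h where "h = a + (1 + 2 * \<mu>) *\<^sub>R c"
  define \<tau> where "\<tau> = \<rho> / (2 * (norm h + 1))"
  have \<tau>0: "\<tau> > 0" proof -
    have "0 < 2 * (norm h + 1)" by (smt (verit) norm_ge_zero)
    thus ?thesis using \<rho> unfolding \<tau>_def by (intro divide_pos_pos)
  qed
  have \<tau>h: "\<tau> * norm h \<le> \<rho> / 2"
  proof -
    have "\<tau> * norm h \<le> \<tau> * (norm h + 1)" using \<tau>0 by simp
    also have "\<dots> = \<rho> / 2" proof - have "norm h + 1 \<noteq> 0" by (smt (verit) norm_ge_zero) thus ?thesis unfolding \<tau>_def by (simp add: field_simps) qed
    finally show ?thesis .
  qed
  define t where "t k = \<tau> * inverse (real (Suc k))" for k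
  have t0: "t k > 0" for k using \<tau>0 by (simp add: t_def)
  have tle: "t k \<le> \<tau>" for k using \<tau>0 by (simp add: t_def mult_le_cancel_left1 inverse_le_1_iff)
  have "\<exists>y. (z + zs + t k *\<^sub>R h) - y \<in> subdiff q y" for k by (rule prox)
  then obtain Y where Y: "\<And>k. (z + zs + t k *\<^sub>R h) - Y k \<in> subdiff q (Y k)" by metis
  define W where "W k = inverse (t k) *\<^sub>R (Y k - z)" for k
  have YW: "Y k - z = t k *\<^sub>R W k" for k using t0[of k] by (simp add: W_def)
  have Ys: "(z + zs + t k *\<^sub>R h) - Y k = zs + t k *\<^sub>R (h - W k)" for k
    using YW[of k] by (simp add: algebra_simps)
  have Wb: "norm (W k) \<le> norm h" for k
  proof -
    have "0 \<le> ((zs + t k *\<^sub>R (h - W k)) - zs) \<bullet> (Y k - z)"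
      using subdiff_mono[OF Y[of k, unfolded Ys] zs] .
    hence "0 \<le> (t k *\<^sub>R (h - W k)) \<bullet> (t k *\<^sub>R W k)" by (simp add: YW)
    hence "0 \<le> t k * t k * ((h - W k) \<bullet> W k)" by simp
    hence "0 \<le> (h - W k) \<bullet> W k" using mult_pos_pos[OF t0[of k] t0[of k]] by (auto simp: zero_le_mult_iff)
    hence "norm (W k)^2 \<le> h \<bullet> W k" by (simp add: inner_diff_left power2_norm_eq_inner)
    also have "\<dots> \<le> norm h * norm (W k)" by (rule Cauchy_Schwarz_ineq2[THEN abs_le_D1])
    finally have "norm (W k) * norm (W k) \<le> norm h * norm (W k)" by (simp add: power2_eq_square)
    then show ?thesis by (cases "norm (W k) = 0") auto
  qed
  have Wstrong: "\<mu> * norm (W k)^2 \<le> (h - W k) \<bullet> W k" for k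
  proof -
    have "dist d (Y k) \<le> dist d z + dist z (Y k)" by (rule dist_triangle)
    also have "dist z (Y k) = t k * norm (W k)" proof - have "dist z (Y k) = norm (Y k - z)" by (metis dist_commute dist_norm) also have "\<dots> = t k * norm (W k)" using YW[of k] t0[of k] by simp finally show ?thesis . qed
    also have "t k * norm (W k) \<le> \<tau> * norm h" using t0[of k] tle[of k] Wb[of k] \<tau>0
      by (intro mult_mono) auto
    finally have "dist d (Y k) \<le> \<rho>" using z \<tau>h by linarith
    hence "\<mu> * norm (Y k - z)^2 \<le> ((zs + t k *\<^sub>R (h - W k)) - zs) \<bullet> (Y k - z)"
    proof -
      have "dist d z \<le> \<rho>" using z \<rho> by linarith
      thus ?thesis using strong[OF _ _ Y[of k, unfolded Ys] zs] \<open>dist d (Y k) \<le> \<rho>\<close> by simp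
    qed
    hence "\<mu> * norm (t k *\<^sub>R W k)^2 \<le> (t k *\<^sub>R (h - W k)) \<bullet> (t k *\<^sub>R W k)" by (simp add: YW)
    hence "(t k * t k) * (\<mu> * norm (W k)^2) \<le> (t k * t k) * ((h - W k) \<bullet> W k)"
      by (simp add: power2_eq_square algebra_simps)
    then show ?thesis using t0[of k] by (simp add: mult_le_cancel_left)
  qed
  obtain w r where r: "strict_mono r" "(W \<circ> r) \<longlonglongrightarrow> w"
    using seq_compactE[OF compact_imp_seq_compact[OF compact_cball[of 0 "norm h"]]] Wb by (metis mem_cball_0)
  have tr: "(t \<circ> r) \<longlonglongrightarrow> 0"
  proof -
    have "(\<lambda>k. inverse (real (Suc (r k)))) \<longlonglongrightarrow> 0"
      using LIMSEQ_subseq_LIMSEQ[OF LIMSEQ_inverse_real_of_nat r(1)] by (simp add: o_def)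
    hence "(\<lambda>k. \<tau> * inverse (real (Suc (r k)))) \<longlonglongrightarrow> \<tau> * 0" by (intro tendsto_intros)
    thus ?thesis by (simp add: t_def o_def)
  qed
  have tan: "(w, h - w) \<in> contingent_cone (graph_of (subdiff q)) (z, zs)"
    unfolding contingent_cone_def
  proof (intro CollectI exI conjI allI)
    show "0 < (t \<circ> r) k" for k using t0 by simp
    show "(t \<circ> r) \<longlonglongrightarrow> 0" by (rule tr)
    show "(\<lambda>k. (W (r k), h - W (r k))) \<longlonglongrightarrow> (w, h - w)"
      using r(2) by (auto intro!: tendsto_intros simp: o_def)
    show "(z, zs) + (t \<circ> r) k *\<^sub>R (W (r k), h - W (r k)) \<in> graph_of (subdiff q)" for k
    proof -
      have mem: "(Y (r k), zs + t (r k) *\<^sub>R (h - W (r k))) \<in> graph_of (subdiff q)"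
        using Y[of "r k", unfolded Ys] by (simp add: graph_of_def)
      have e1: "z + t (r k) *\<^sub>R W (r k) = Y (r k)" using YW[of "r k"] by (metis add.commute diff_add_cancel)
      have "(z, zs) + (t \<circ> r) k *\<^sub>R (W (r k), h - W (r k)) = (Y (r k), zs + t (r k) *\<^sub>R (h - W (r k)))"
        using e1 by simp
      with mem show ?thesis by simp
    qed
  qed
  have ii: "a \<bullet> w + c \<bullet> (h - w) \<le> 0"
    using nc tan unfolding regular_normal_cone_def by auto
  have i: "\<mu> * norm w ^ 2 \<le> (h - w) \<bullet> w"
  proof (rule tendsto_le[OF trivial_limit_sequentially])
    show "(\<lambda>k. (h - (W \<circ> r) k) \<bullet> (W \<circ> r) k) \<longlonglongrightarrow> (h - w) \<bullet> w"
      using r(2) by (intro tendsto_intros)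
    show "(\<lambda>k. \<mu> * norm ((W \<circ> r) k) ^ 2) \<longlonglongrightarrow> \<mu> * norm w ^ 2"
      using r(2) by (intro tendsto_intros)
    show "\<forall>\<^sub>F k in sequentially. \<mu> * norm ((W \<circ> r) k)^2 \<le> (h - (W \<circ> r) k) \<bullet> (W \<circ> r) k"
      using Wstrong by simp
  qed
  show ?thesis using algebra_key[OF \<mu>, of w a c] i ii unfolding h_def by simp
qed

lemma limiting_bound:
  fixes q :: "'a::euclidean_space \<Rightarrow> ereal"
  assumes prox: "\<And>v. \<exists>y. v - y \<in> subdiff q y"
    and \<rho>: "\<rho> > 0" and \<mu>: "\<mu> \<ge> 0"
    and strong: "\<And>d1 d2 d1s d2s. d1 \<in> cball d \<rho> \<Longrightarrow> d2 \<in> cball d \<rho> \<Longrightarrow> d1s \<in> subdiff q d1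
       \<Longrightarrow> d2s \<in> subdiff q d2 \<Longrightarrow> \<mu> * norm (d1 - d2)^2 \<le> (d1s - d2s) \<bullet> (d1 - d2)"
    and nc: "(u, - s) \<in> limiting_normal_cone (graph_of (subdiff q)) (d, ds)"
  shows "\<mu> * norm s ^ 2 \<le> u \<bullet> s"
proof -
  obtain zk vk where zk: "\<And>k. zk k \<in> graph_of (subdiff q)" "\<And>k. vk k \<in> regular_normal_cone (graph_of (subdiff q)) (zk k)"
    and lz: "zk \<longlonglongrightarrow> (d, ds)" and lv: "vk \<longlonglongrightarrow> (u, - s)"
    using nc unfolding limiting_normal_cone_def by blast
  have "(\<lambda>k. fst (zk k)) \<longlonglongrightarrow> fst (d, ds)" using lz by (rule tendsto_fst)
  hence "eventually (\<lambda>k. dist (fst (zk k)) d < \<rho> / 2) sequentially"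
    using \<rho> by (intro tendstoD) auto
  hence ev: "eventually (\<lambda>k. \<mu> * norm (snd (vk k))^2 \<le> - (fst (vk k) \<bullet> snd (vk k))) sequentially"
  proof (rule eventually_mono)
    fix k assume dk: "dist (fst (zk k)) d < \<rho> / 2"
    obtain z zs where zz: "zk k = (z, zs)" by (cases "zk k")
    obtain a c where ac: "vk k = (a, c)" by (cases "vk k")
    have "zs \<in> subdiff q z" using zk(1)[of k] zz by (simp add: graph_of_def)
    moreover have "dist d z < \<rho> / 2" using dk zz by (simp add: dist_commute)
    ultimately have "\<mu> * norm c ^ 2 \<le> - (a \<bullet> c)"
      using regular_normal_bound[where q=q and d=d and \<rho>=\<rho> and \<mu>=\<mu> and z=z and zs=zs and a=a and c=c, OF prox \<rho> \<mu> strong] zk(2)[of k] zz ac by auto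
    thus "\<mu> * norm (snd (vk k))^2 \<le> - (fst (vk k) \<bullet> snd (vk k))" using ac by simp
  qed
  have l1: "(\<lambda>k. fst (vk k)) \<longlonglongrightarrow> u" using tendsto_fst[OF lv] by simp
  have l2: "(\<lambda>k. snd (vk k)) \<longlonglongrightarrow> - s" using tendsto_snd[OF lv] by simp
  have "\<mu> * norm (- s)^2 \<le> - (u \<bullet> (- s))"
  proof (rule tendsto_le[OF trivial_limit_sequentially _ _ ev])
    show "(\<lambda>k. - (fst (vk k) \<bullet> snd (vk k))) \<longlonglongrightarrow> - (u \<bullet> (- s))"
      using l1 l2 by (intro tendsto_intros)
    show "(\<lambda>k. \<mu> * norm (snd (vk k))^2) \<longlonglongrightarrow> \<mu> * norm (- s)^2"
      using l2 by (intro tendsto_intros)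
  qed
  thus ?thesis by simp
qed

definition gq :: "('a::real_inner \<Rightarrow> ereal) \<Rightarrow> 'a \<Rightarrow> real \<Rightarrow> ereal" where
  "gq q d \<rho> = Inf {ereal (((d1s - d2s) \<bullet> (d1 - d2)) / (norm (d1 - d2))\<^sup>2) | d1 d2 d1s d2s.
             d1 \<in> cball d \<rho> \<and> d2 \<in> cball d \<rho> \<and> d1s \<in> subdiff q d1 \<and> d2s \<in> subdiff q d2
             \<and> d1 \<noteq> d2}"

lemma gq_antimono:
  assumes "\<rho>1 \<le> \<rho>2" shows "gq q d \<rho>2 \<le> gq q d \<rho>1"
proof -
  have sub: "cball d \<rho>1 \<subseteq> cball d \<rho>2" using assms by (rule subset_cball)
  show ?thesis unfolding gq_def by (rule Inf_superset_mono) (use sub in blast)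
qed

lemma mu_q_local:
  fixes q :: "real^'n \<Rightarrow> ereal"
  assumes "ereal \<mu> < mu_q q d"
  shows "\<exists>\<rho>>0. \<forall>d1 d2 d1s d2s. d1 \<in> cball d \<rho> \<longrightarrow> d2 \<in> cball d \<rho> \<longrightarrow> d1s \<in> subdiff q d1
       \<longrightarrow> d2s \<in> subdiff q d2 \<longrightarrow> max 0 \<mu> * norm (d1 - d2)^2 \<le> (d1s - d2s) \<bullet> (d1 - d2)"
proof -
  define L where "L = (SUP \<rho>\<in>{0<..}. gq q d \<rho>)"
  have lim: "(gq q d \<longlongrightarrow> L) (at_right 0)"
  proof (rule order_tendstoI)
    fix a assume "a < L"
    then obtain \<rho>0 where \<rho>0: "\<rho>0 > 0" "a < gq q d \<rho>0" unfolding L_def by (auto simp: less_SUP_iff)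
    show "eventually (\<lambda>\<rho>. a < gq q d \<rho>) (at_right 0)"
      unfolding eventually_at_right_field
      using \<rho>0 gq_antimono[of _ \<rho>0 q d] by (intro exI[of _ \<rho>0]) (auto intro: order.strict_trans2)
  next
    fix a assume "L < a"
    have "gq q d \<rho> \<le> L" if "\<rho> > 0" for \<rho> unfolding L_def using that by (intro SUP_upper) auto
    then show "eventually (\<lambda>\<rho>. gq q d \<rho> < a) (at_right 0)"
      unfolding eventually_at_right_field using \<open>L < a\<close>
      by (intro exI[of _ 1]) (auto intro: order.strict_trans1)
  qed
  have "mu_q q d = L"
    unfolding mu_q_def gq_def[symmetric] by (rule tendsto_Lim[OF trivial_limit_at_right_real lim])
  then obtain \<rho> where \<rho>: "\<rho> > 0" "ereal \<mu> < gq q d \<rho>"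
    using assms unfolding L_def by (auto simp: less_SUP_iff)
  show ?thesis
  proof (intro exI[of _ \<rho>] conjI allI impI \<rho>(1))
    fix d1 d2 d1s d2s assume H: "d1 \<in> cball d \<rho>" "d2 \<in> cball d \<rho>" "d1s \<in> subdiff q d1" "d2s \<in> subdiff q d2"
    have m0: "0 \<le> (d1s - d2s) \<bullet> (d1 - d2)" using subdiff_mono[OF H(3,4)] .
    show "max 0 \<mu> * norm (d1 - d2)^2 \<le> (d1s - d2s) \<bullet> (d1 - d2)"
    proof (cases "d1 = d2")
      case True then show ?thesis by simp
    next
      case False
      hence N: "norm (d1 - d2)^2 > 0" by simp
      have "gq q d \<rho> \<le> ereal (((d1s - d2s) \<bullet> (d1 - d2)) / (norm (d1 - d2))\<^sup>2)"
        unfolding gq_def using H False by (intro Inf_lower) blast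
      with \<rho>(2) have "\<mu> < ((d1s - d2s) \<bullet> (d1 - d2)) / (norm (d1 - d2))\<^sup>2" using order.strict_trans2 ereal_less(2) by (metis ereal_less_eq(3) less_ereal.simps(1))
      hence "\<mu> * norm (d1 - d2)^2 < (d1s - d2s) \<bullet> (d1 - d2)" using N by (simp add: less_divide_eq)
      moreover have "0 * norm (d1 - d2)^2 \<le> (d1s - d2s) \<bullet> (d1 - d2)" using m0 by simp
      ultimately show ?thesis by (simp add: max_def)
    qed
  qed
qed

theorem lemma4p4:
  fixes f :: "real^'n \<Rightarrow> real^'n" and J :: "real^'n \<Rightarrow> real^'n^'n"
    and q :: "real^'n \<Rightarrow> ereal" and x d ds :: "real^'n"
  assumes deriv: "\<And>y. (f has_derivative (\<lambda>h. J y *v h)) (at y)"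
    and C1: "continuous_on UNIV J"
    and mono: "monotone_map f"
    and proper: "proper_fun q" and cvx: "convex_efun q" and lsc: "lsc_fun q"
    and dom: "subdiff q d \<noteq> {}"
    and ds: "ds \<in> subdiff q d"
  shows "(INF s\<in>sphere 0 1. edist0 {transpose (J x) *v s + u | u. u \<in> coderivative (subdiff q) d ds s})
           \<ge> ereal (mu_f (J x)) + mu_q q d"
proof (rule INF_greatest)
  fix s :: "real^'n" assume s: "s \<in> sphere 0 1"
  hence ns: "norm s = 1" by simp
  have prox: "\<And>v. \<exists>y. v - y \<in> subdiff q y" using prox_exists[OF cvx lsc ds] .
  define A where "A = J x"
  have bdd: "bdd_below ((\<lambda>u. (A *v u) \<bullet> u) ` sphere 0 1)"
  proof -
    have "continuous_on (sphere 0 1) (\<lambda>u. (A *v u) \<bullet> u)" by (intro continuous_intros)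
    hence "compact ((\<lambda>u. (A *v u) \<bullet> u) ` sphere 0 1)" by (intro compact_continuous_image) auto
    thus ?thesis by (intro bounded_imp_bdd_below compact_imp_bounded)
  qed
  have mf: "mu_f A \<le> (transpose A *v s) \<bullet> s"
  proof -
    have "mu_f A \<le> (A *v s) \<bullet> s" unfolding mu_f_def using bdd s by (intro cInf_lower) auto
    also have "(A *v s) \<bullet> s = (transpose A *v s) \<bullet> s"
      using dot_lmul_matrix[of s A s] by (simp add: inner_commute)
    finally show ?thesis .
  qed
  show "ereal (mu_f (J x)) + mu_q q d
        \<le> edist0 {transpose (J x) *v s + u | u. u \<in> coderivative (subdiff q) d ds s}"
    unfolding edist0_def A_def[symmetric]
  proof (rule INF_greatest)
    fix w assume "w \<in> {transpose A *v s + u | u. u \<in> coderivative (subdiff q) d ds s}"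
    then obtain u where w: "w = transpose A *v s + u" and u: "(u, - s) \<in> limiting_normal_cone (graph_of (subdiff q)) (d, ds)"
      by (auto simp: coderivative_def)
    have ub: "\<mu> \<le> u \<bullet> s" if lt: "ereal \<mu> < mu_q q d" for \<mu>
    proof -
      obtain \<rho> where \<rho>: "\<rho> > 0" and st: "\<forall>d1 d2 d1s d2s. d1 \<in> cball d \<rho> \<longrightarrow> d2 \<in> cball d \<rho> \<longrightarrow> d1s \<in> subdiff q d1
       \<longrightarrow> d2s \<in> subdiff q d2 \<longrightarrow> max 0 \<mu> * norm (d1 - d2)^2 \<le> (d1s - d2s) \<bullet> (d1 - d2)"
        using mu_q_local[OF lt] by blast
      have "max 0 \<mu> * norm s ^ 2 \<le> u \<bullet> s"
        by (rule limiting_bound[OF prox \<rho> _ _ u]) (use st in auto)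
      thus ?thesis using ns by simp
    qed
    have nw: "mu_f A + u \<bullet> s \<le> norm w"
    proof -
      have "mu_f A + u \<bullet> s \<le> (transpose A *v s) \<bullet> s + u \<bullet> s" using mf by simp
      also have "\<dots> = w \<bullet> s" by (simp add: w inner_add_left)
      also have "\<dots> \<le> norm w * norm s" by (rule norm_cauchy_schwarz)
      finally show ?thesis using ns by simp
    qed
    show "ereal (mu_f A) + mu_q q d \<le> ereal (norm w)"
    proof (cases "mu_q q d")
      case (real m)
      have "m \<le> u \<bullet> s" by (rule dense_le) (use ub real in auto)
      then show ?thesis using real nw by simp
    next
      case PInf
      with ub[of "u \<bullet> s + 1"] show ?thesis by simp
    next
      case MInf then show ?thesis by simp
    qed
  qed
qed

end
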